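(* Let $\lambda\in(0,1)$. Consider the maps $\tau_0(x)=\lambda x$ and $\tau_{1/4}(x)=\lambda\left(x+\frac14\right)$ on $\mathbb{R}$, let $X_L$ be their attractor, and let $W(x)=\cos^2\left(\frac{2\pi x}{\lambda}\right)$. Then there is no $W$-cycle of (minimal) length $p>1$ for this system; that is, there do not exist $p\ge 2$, a point $x\in X_L$ and letters $\omega_1,\dots,\omega_p\in\{0,\frac14\}$ such that $\tau_{\omega_p}\cdots\tau_{\omega_1}x=x$, the points $x,\tau_{\omega_1}x,\dots,\tau_{\omega_{p-1}}\cdots\tau_{\omega_1}x$ form a cycle of minimal length $p$, and $W=1$ at every point of this cycle.
   Context: The attractor $X_L$ is the unique nonempty compact set $X_L\subset\mathbb{R}$ with $X_L=\tau_0(X_L)\cup\tau_{1/4}(X_L)$; equivalently $X_L=\{\sum_{k\ge1}\omega_k\lambda^k:\omega_k\in\{0,\frac14\}\}$. A cycle: if $x\in X_L$ satisfies $\tau_{\omega_p}\cdots\tau_{\omega_1}x=x$ for some $\omega_1,\dots,\omega_p\in\{0,\frac14\}$, the set $C=\{x,\tau_{\omega_1}x,\dots,\tau_{\omega_{p-1}}\cdots\tau_{\omega_1}x\}$ is a cycle; if $p$ is the minimal period with which it closes up, $C$ is a $p$-cycle. A $W$-cycle is a cycle $C$ with $W(y)=1$ for all $y\in C$. *)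

theory Defs
  imports "HOL-Analysis.Analysis"
begin

definition tau :: "real \<Rightarrow> real \<Rightarrow> real \<Rightarrow> real" where
  "tau lam w x = lam * (x + w)"

text \<open>The attractor X_L, via its explicit description
  X_L = { sum_{k>=1} omega_k lambda^k : omega_k in {0, 1/4} }.\<close>
definition XL :: "real \<Rightarrow> real set" where
  "XL lam = {x. \<exists>om :: nat \<Rightarrow> real. (\<forall>k. om k \<in> {0, 1/4}) \<and>
                   x = (\<Sum>k. om k * lam ^ (Suc k))}"

definition W :: "real \<Rightarrow> real \<Rightarrow> real" where
  "W lam x = (cos (2 * pi * x / lam))\<^sup>2"

text \<open>orbit lam ws x j = tau_{ws!(j-1)} ... tau_{ws!0} x (apply the first j letters).\<close>
definition orbit :: "real \<Rightarrow> real list \<Rightarrow> real \<Rightarrow> nat \<Rightarrow> real" where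
  "orbit lam ws x j = foldl (\<lambda>y w. tau lam w y) x (take j ws)"

definition W_cycle :: "real \<Rightarrow> real list \<Rightarrow> real \<Rightarrow> bool" where
  "W_cycle lam ws x \<longleftrightarrow>
     x \<in> XL lam \<and> set ws \<subseteq> {0, 1/4} \<and> length ws \<ge> 1 \<and>
     orbit lam ws x (length ws) = x \<and>
     (\<forall>q. 0 < q \<and> q < length ws \<longrightarrow> orbit lam ws x q \<noteq> x) \<and>
     (\<forall>j < length ws. W lam (orbit lam ws x j) = 1)"

end

theory Submission
  imports Defs
begin

lemma W1_int:
  assumes "0 < lam" "W lam y = 1"
  shows "\<exists>k::int. y = lam * of_int k / 2"
proof -
  have "(sin (2 * pi * y / lam))\<^sup>2 = 0"
    using assms(2) unfolding W_def by (simp add: sin_squared_eq)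
  then have "sin (2 * pi * y / lam) = 0" by simp
  then obtain i :: int where i: "2 * pi * y / lam = of_int i * pi"
    using sin_zero_iff_int2 by blast
  then have "pi * (2 * y / lam) = pi * of_int i" by (simp add: field_simps)
  then have "2 * y / lam = of_int i"
    by (metis mult_cancel_left pi_neq_zero times_divide_eq_right)
  then have "y = lam * of_int i / 2" using assms(1) by (simp add: field_simps)
  then show ?thesis by blast
qed

lemma orbit_Suc:
  assumes "j < length ws"
  shows "orbit lam ws x (Suc j) = tau lam (ws ! j) (orbit lam ws x j)"
  using assms unfolding orbit_def by (simp add: take_Suc_conv_app_nth)

lemma orbit_0: "orbit lam ws x 0 = x"
  unfolding orbit_def by simp

lemma XL_nonneg:
  assumes "0 < lam" "lam < 1" "x \<in> XL lam"
  shows "0 \<le> x"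
proof -
  obtain om where om: "\<forall>k. om k \<in> {0, 1/4}" and x: "x = (\<Sum>k. om k * lam ^ (Suc k))"
    using assms(3) unfolding XL_def by blast
  have nn: "\<And>k. 0 \<le> om k * lam ^ Suc k" using om assms(1)
    by (metis empty_iff insert_iff less_eq_real_def mult_nonneg_nonneg zero_le_power zero_le_divide_1_iff zero_le_numeral)
  have sg: "summable (\<lambda>k. lam ^ Suc k)" using assms
    by (simp add: summable_geometric summable_mult)
  have "\<And>k. norm (om k * lam ^ Suc k) \<le> lam ^ Suc k"
  proof -
    fix k
    have "om k \<le> 1" using om[rule_format, of k] by auto
    then have "om k * lam ^ Suc k \<le> 1 * lam ^ Suc k"
      using assms(1) by (intro mult_right_mono) auto
    then show "norm (om k * lam ^ Suc k) \<le> lam ^ Suc k" using nn[of k] by simp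
  qed
  then have "summable (\<lambda>k. om k * lam ^ Suc k)"
    using summable_comparison_test'[OF sg, of 0 "\<lambda>k. om k * lam ^ Suc k"] by blast
  then show ?thesis unfolding x using nn by (simp add: suminf_nonneg)
qed

lemma int_step:
  fixes k k' :: int and lam w :: real
  assumes "0 < lam" "lam < 1" "k \<ge> 0" "w \<in> {0, 1/4}"
    and "real_of_int k' = lam * real_of_int k + 2 * w"
  shows "k' \<le> k"
proof (cases "k = 0")
  case True
  then have "real_of_int k' < 1" using assms by auto
  then show ?thesis using True by simp
next
  case False
  then have "real_of_int k \<ge> 1" using assms(3) by simp
  then have "lam * real_of_int k < real_of_int k" using assms by simp
  then have "real_of_int k' < real_of_int k + 1" using assms by auto
  then show ?thesis by linarith
qed

theorem theorem3p3:
  fixes lam :: real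
  assumes "0 < lam" and "lam < 1"
  shows "\<not> (\<exists>ws x. length ws \<ge> 2 \<and> W_cycle lam ws x)"
proof
  assume "\<exists>ws x. length ws \<ge> 2 \<and> W_cycle lam ws x"
  then obtain ws x where len: "length ws \<ge> 2" and C: "W_cycle lam ws x" by blast
  define p where "p = length ws"
  define y where "y = orbit lam ws x"
  have xXL: "x \<in> XL lam" and ws01: "set ws \<subseteq> {0, 1/4}"
    and per: "y p = x" and mini: "\<And>q. 0 < q \<Longrightarrow> q < p \<Longrightarrow> y q \<noteq> x"
    and Wy: "\<And>j. j < p \<Longrightarrow> W lam (y j) = 1"
    using C unfolding W_cycle_def p_def y_def by auto
  have y0: "y 0 = x" unfolding y_def by (rule orbit_0)
  have step: "\<And>j. j < p \<Longrightarrow> y (Suc j) = lam * (y j + ws ! j)"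
    unfolding y_def p_def using orbit_Suc by (simp add: tau_def)
  have wsj: "\<And>j. j < p \<Longrightarrow> ws ! j \<in> {0, 1/4}"
    using ws01 p_def nth_mem by blast
  have nonneg: "\<And>j. j \<le> p \<Longrightarrow> 0 \<le> y j"
  proof -
    fix j show "j \<le> p \<Longrightarrow> 0 \<le> y j"
    proof (induction j)
      case 0 then show ?case using y0 XL_nonneg[OF assms xXL] by simp
    next
      case (Suc j)
      then have "0 \<le> y j" "ws ! j \<ge> 0" using wsj[of j] by auto
      then show ?case using step[of j] Suc.prems assms(1) by simp
    qed
  qed
  have Wy': "\<And>j. j \<le> p \<Longrightarrow> \<exists>k::int. y j = lam * of_int k / 2"
  proof -
    fix j assume "j \<le> p"
    show "\<exists>k::int. y j = lam * of_int k / 2"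
    proof (cases "j < p")
      case True then show ?thesis using W1_int[OF assms(1) Wy] by blast
    next
      case False
      then have "j = p" using \<open>j \<le> p\<close> by simp
      then have "y j = y 0" using per y0 by simp
      moreover have "0 < p" using len unfolding p_def by linarith
      ultimately show ?thesis using W1_int[OF assms(1) Wy[of 0]] by simp
    qed
  qed
  have dec: "\<And>j. j < p \<Longrightarrow> y (Suc j) \<le> y j"
  proof -
    fix j assume j: "j < p"
    obtain k :: int where k: "y j = lam * of_int k / 2" using Wy' j by force
    obtain k' :: int where k': "y (Suc j) = lam * of_int k' / 2" using Wy' j by force
    have "0 \<le> lam * of_int k / 2" using nonneg[of j] j k by simp
    then have "k \<ge> 0" using assms(1) by (simp add: zero_le_mult_iff)
    have "lam * of_int k' / 2 = lam * (lam * of_int k / 2 + ws ! j)"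
      using step[OF j] k k' by simp
    then have "lam * real_of_int k' = lam * (lam * real_of_int k + 2 * ws ! j)"
      using assms(1) by (simp add: field_simps)
    then have "real_of_int k' = lam * real_of_int k + 2 * ws ! j"
      using assms(1) by simp
    then have "k' \<le> k" using int_step[OF assms \<open>k \<ge> 0\<close> wsj[OF j]] by blast
    then have "lam * real_of_int k' \<le> lam * real_of_int k" using assms(1) by simp
    then show "y (Suc j) \<le> y j" using k k' by simp
  qed
  have chain: "\<And>j. 1 \<le> j \<Longrightarrow> j \<le> p \<Longrightarrow> y j \<le> y 1"
  proof -
    fix j show "1 \<le> j \<Longrightarrow> j \<le> p \<Longrightarrow> y j \<le> y 1"
    proof (induction j)
      case 0 then show ?case by simp
    next
      case (Suc j)
      show ?case
      proof (cases "j = 0")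
        case True then show ?thesis by simp
      next
        case False
        then have "y j \<le> y 1" using Suc by simp
        moreover have "y (Suc j) \<le> y j" using dec Suc.prems by simp
        ultimately show ?thesis by simp
      qed
    qed
  qed
  have p0: "0 < p" using len unfolding p_def by linarith
  have "y 1 \<le> x" using dec[OF p0] y0 by simp
  moreover have "x \<le> y 1" using chain[of p] per len p_def by simp
  ultimately have "y 1 = x" by simp
  moreover have "1 < p" using len unfolding p_def by linarith
  ultimately show False using mini[of 1] by simp
qed

end
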